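(* Consider $x[t+1]=Ax[t]$, $y_i[t]=C_ix[t]+e_i[t]$, $i=1,\dots,p$, with $A\in\mathbb{R}^{n\times n}$, $C_i\in\mathbb{R}^{1\times n}$, $C\in\mathbb{R}^{p\times n}$ the matrix with rows $C_i$, where the attack $e[t]=(e_1[t],\dots,e_p[t])^T$ is arbitrary on a fixed set of at most $s$ indices and zero elsewhere for all $t$. For each $i$ let $Y_i[t]=(y_i[t],y_i[t+1],\dots,y_i[t+n-1])^T\in\mathbb{R}^n$ and $Y[t]=(Y_1[t]^T,\dots,Y_p[t]^T)^T\in\mathbb{R}^{pn}$. Let $D\in\mathbb{R}^{v\times p}$. Suppose there exists an estimator whose output sequence $(\hat x[t])_{t\in\mathbb{N}}$ is determined solely by the sequence $\big((D\otimes I_n)Y[t]\big)_{t\in\mathbb{N}}$ and which satisfies $\lim_{t\to\infty}\|x[t]-\hat x[t]\|=0$ for every initial condition $x[0]\in\mathbb{R}^n$ and every such attack signal. Then $(A,C)$ is $2s$-sparse detectable with respect to $D$.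
   Context: A pair $(A,M)$ is detectable if every eigenvalue of $A$ of modulus $\ge1$ is observable, i.e. $Mw\ne0$ for every (complex) eigenvector $w$ of $A$ whose eigenvalue has modulus $\ge 1$. Let $\mathbf{E}_p$ be the standard basis of $\mathbb{R}^p$. For $D\in\mathbb{R}^{v\times p}$ and $k\in\mathbb{N}$, let $\mathbf{P}_k(D)$ be the set of all real matrices $L$ with $v$ columns (any number of rows) such that $\ker(L)=D(\mathrm{span}\,V)$ for some $V\subseteq\mathbf{E}_p$ with $|V|\le k$. $(A,C)$ is $k$-sparse detectable with respect to $D$ if $(A,LDC)$ is detectable for every $L\in\mathbf{P}_k(D)$. $\otimes$ is the Kronecker product. *)

theory Defs
  imports Jordan_Normal_Form.Char_Poly Jordan_Normal_Form.Matrix_Kernel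
begin

text \<open>Matrices/vectors are Jordan_Normal_Form matrices with explicit (nat) dimensions;
  all indices start at 0.\<close>

text \<open>Kronecker product: (X \<otimes> Z) at ((i,k),(j,l)) = X(i,j) * Z(k,l), row index i*rows(Z)+k.\<close>
definition kron :: "'a::semiring_0 mat \<Rightarrow> 'a mat \<Rightarrow> 'a mat" where
  "kron X Z = mat (dim_row X * dim_row Z) (dim_col X * dim_col Z)
     (\<lambda>(i,j). X $$ (i div dim_row Z, j div dim_col Z) * Z $$ (i mod dim_row Z, j mod dim_col Z))"

definition detectable :: "real mat \<Rightarrow> real mat \<Rightarrow> bool" where
  "detectable A M = (\<forall>w lam. eigenvector (map_mat complex_of_real A) w lam \<and> 1 \<le> cmod lam
      \<longrightarrow> map_mat complex_of_real M *\<^sub>v w \<noteq> 0\<^sub>v (dim_row M))"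

definition std_basis :: "nat \<Rightarrow> real vec set" where
  "std_basis p = {unit_vec p j | j. j < p}"

definition span_vecs :: "nat \<Rightarrow> real vec set \<Rightarrow> real vec set" where
  "span_vecs p V = {finsum_vec TYPE(real) p (\<lambda>w. c w \<cdot>\<^sub>v w) V | c. True}"

text \<open>P_k(D): real matrices L with v = rows(D) columns (any number of rows) such that
  ker L = D(span V) for some V \<subseteq> E_p, |V| \<le> k.\<close>
definition P_set :: "nat \<Rightarrow> real mat \<Rightarrow> real mat set" where
  "P_set k D = {L. dim_col L = dim_row D \<and>
     (\<exists>V \<subseteq> std_basis (dim_col D). card V \<le> k \<and>
        mat_kernel L = (\<lambda>z. D *\<^sub>v z) ` span_vecs (dim_col D) V)}"

definition sparse_detectable :: "nat \<Rightarrow> real mat \<Rightarrow> real mat \<Rightarrow> real mat \<Rightarrow> bool" where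
  "sparse_detectable k A C D = (\<forall>L \<in> P_set k D. detectable A (L * D * C))"

definition traj :: "real mat \<Rightarrow> real vec \<Rightarrow> nat \<Rightarrow> real vec" where
  "traj A x0 t = (A ^\<^sub>m t) *\<^sub>v x0"

definition meas :: "real mat \<Rightarrow> real mat \<Rightarrow> real vec \<Rightarrow> (nat \<Rightarrow> real vec) \<Rightarrow> nat \<Rightarrow> real vec" where
  "meas A C x0 e t = C *\<^sub>v traj A x0 t + e t"

definition attack_ok :: "nat \<Rightarrow> nat \<Rightarrow> (nat \<Rightarrow> real vec) \<Rightarrow> bool" where
  "attack_ok p s e = (\<exists>S \<subseteq> {0..<p}. card S \<le> s \<and>
      (\<forall>t. e t \<in> carrier_vec p \<and> (\<forall>j<p. j \<notin> S \<longrightarrow> e t $ j = 0)))"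

text \<open>Y[t] = (Y_1[t]^T,...,Y_p[t]^T)^T with Y_i[t] = (y_i[t],...,y_i[t+n-1])^T;
  entry i*n+k (0-based) is y_i[t+k].\<close>
definition stack_Y :: "nat \<Rightarrow> nat \<Rightarrow> (nat \<Rightarrow> real vec) \<Rightarrow> nat \<Rightarrow> real vec" where
  "stack_Y n p y t = vec (p * n) (\<lambda>q. y (t + q mod n) $ (q div n))"

definition dist_n :: "nat \<Rightarrow> real vec \<Rightarrow> real vec \<Rightarrow> real" where
  "dist_n n x z = sqrt (\<Sum>i<n. (x $ i - z $ i)\<^sup>2)"

end

theory Submission
  imports Defs
begin

lemma Re_mat_vec:
  assumes "M \<in> carrier_mat k m" "w \<in> carrier_vec m"
  shows "map_vec Re (map_mat complex_of_real M *\<^sub>v w) = M *\<^sub>v map_vec Re w"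
  using assms by (intro eq_vecI) (auto simp: scalar_prod_def Re_sum)

lemma Im_mat_vec:
  assumes "M \<in> carrier_mat k m" "w \<in> carrier_vec m"
  shows "map_vec Im (map_mat complex_of_real M *\<^sub>v w) = M *\<^sub>v map_vec Im w"
  using assms by (intro eq_vecI) (auto simp: scalar_prod_def Im_sum)

lemma comp_le_dist:
  assumes "i < n"
  shows "\<bar>x $ i - z $ i\<bar> \<le> dist_n n x z"
proof -
  have "(x $ i - z $ i)\<^sup>2 \<le> (\<Sum>k<n. (x $ k - z $ k)\<^sup>2)"
    using assms by (intro member_le_sum) auto
  then have "sqrt ((x $ i - z $ i)\<^sup>2) \<le> dist_n n x z"
    unfolding dist_n_def by (rule real_sqrt_le_mono)
  then show ?thesis by simp
qed

lemma comp_tendsto: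
  assumes "(\<lambda>t. dist_n n (x t) (z t)) \<longlonglongrightarrow> 0" "i < n"
  shows "(\<lambda>t. x t $ i - z t $ i) \<longlonglongrightarrow> 0"
proof (rule tendsto_sandwich[of "\<lambda>t. - dist_n n (x t) (z t)" _ _ "\<lambda>t. dist_n n (x t) (z t)"])
  show "\<forall>\<^sub>F t in sequentially. - dist_n n (x t) (z t) \<le> x t $ i - z t $ i"
    using comp_le_dist[OF assms(2)] by (intro always_eventually allI) (smt (verit))
  show "\<forall>\<^sub>F t in sequentially. x t $ i - z t $ i \<le> dist_n n (x t) (z t)"
    using comp_le_dist[OF assms(2)] by (intro always_eventually allI) (smt (verit))
  show "(\<lambda>t. - dist_n n (x t) (z t)) \<longlonglongrightarrow> 0" using tendsto_minus[OF assms(1)] by simp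
qed (rule assms(1))


lemma sum_mod_block:
  fixes g :: "nat \<Rightarrow> real"
  assumes "k < n"
  shows "(\<Sum>r<p*n. if r mod n = k then g (r div n) else 0) = (\<Sum>j<p. g j)"
proof (induction p)
  case 0 then show ?case by simp
next
  case (Suc p)
  define f where "f = (\<lambda>r. if r mod n = k then g (r div n) else 0)"
  have "sum f {0..<p*n + n} = sum f {0..<p*n} + sum f {p*n..<p*n+n}"
    by (rule sum.atLeastLessThan_concat[symmetric]) auto
  moreover have "sum f {p*n..<p*n+n} = sum (\<lambda>i. f (i + p*n)) {0..<n}"
    using sum.shift_bounds_nat_ivl[of f 0 "p*n" n] by (simp add: add.commute)
  moreover have "sum (\<lambda>i. f (i + p*n)) {0..<n} = sum (\<lambda>i. if i = k then g p else 0) {0..<n}"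
  proof (rule sum.cong[OF refl])
    fix i assume "i \<in> {0..<n}"
    then have "(i + p*n) mod n = i" "i < n" by auto
    moreover have "i < n \<Longrightarrow> (i + p*n) div n = p" by simp
    ultimately show "f (i + p*n) = (if i = k then g p else 0)" unfolding f_def by simp
  qed
  moreover have "sum (\<lambda>i. if i = k then g p else 0) {0..<n} = g p" using assms by simp
  ultimately have "sum f {0..<Suc p * n} = sum f {0..<p*n} + g p" by (simp add: add.commute)
  then show ?case using Suc unfolding f_def by (simp add: atLeast0LessThan)
qed

lemma kron_stack_entry:
  assumes D: "D \<in> carrier_mat v p" and q: "q < v * n"
    and y: "y (\<tau> + q mod n) \<in> carrier_vec p"
  shows "(kron D (1\<^sub>m n) *\<^sub>v stack_Y n p y \<tau>) $ q = (D *\<^sub>v y (\<tau> + q mod n)) $ (q div n)"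
proof -
  have n: "q mod n < n" using q by (metis mod_less_divisor mult_0_right neq0_conv not_less0)
  have qd: "q div n < v" using q by (simp add: less_mult_imp_div_less)
  have "(kron D (1\<^sub>m n) *\<^sub>v stack_Y n p y \<tau>) $ q
      = (\<Sum>r<p*n. kron D (1\<^sub>m n) $$ (q, r) * stack_Y n p y \<tau> $ r)"
    using q D by (simp add: kron_def stack_Y_def scalar_prod_def atLeast0LessThan)
  also have "\<dots> = (\<Sum>r<p*n. if r mod n = q mod n then D $$ (q div n, r div n) * y (\<tau> + q mod n) $ (r div n) else 0)"
  proof (intro sum.cong refl)
    fix r assume r: "r \<in> {..<p*n}"
    have rd: "r div n < p" using r by (simp add: less_mult_imp_div_less)
    have rn: "r mod n < n" using n by simp
    show "kron D (1\<^sub>m n) $$ (q, r) * stack_Y n p y \<tau> $ r = (if r mod n = q mod n then D $$ (q div n, r div n) * y (\<tau> + q mod n) $ (r div n) else 0)"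
      using r q D n rn by (auto simp: kron_def stack_Y_def)
  qed
  also have "\<dots> = (\<Sum>j<p. D $$ (q div n, j) * y (\<tau> + q mod n) $ j)"
    by (rule sum_mod_block[OF n])
  also have "\<dots> = (D *\<^sub>v y (\<tau> + q mod n)) $ (q div n)"
    using D y qd by (simp add: scalar_prod_def atLeast0LessThan)
  finally show ?thesis .
qed


lemma lemmaK:
  fixes A C D :: "real mat" and n p v s :: nat
    and F :: "(nat \<Rightarrow> real vec) \<Rightarrow> (nat \<Rightarrow> real vec)"
  assumes A: "A \<in> carrier_mat n n" and C: "C \<in> carrier_mat p n" and D: "D \<in> carrier_mat v p"
    and est: "\<forall>x0 \<in> carrier_vec n. \<forall>e. attack_ok p s e \<longrightarrow>
           (\<lambda>t. dist_n n (traj A x0 t)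
                  (F (\<lambda>\<tau>. kron D (1\<^sub>m n) *\<^sub>v stack_Y n p (meas A C x0 e) \<tau>) t))
           \<longlonglongrightarrow> 0"
    and x0: "x0 \<in> carrier_vec n" and J: "J \<subseteq> {0..<p}" "card J \<le> 2 * s"
    and z: "\<And>t. z t \<in> carrier_vec p" "\<And>t j. j < p \<Longrightarrow> j \<notin> J \<Longrightarrow> z t $ j = 0"
    and eq: "\<And>t. D *\<^sub>v (C *\<^sub>v traj A x0 t) = D *\<^sub>v z t"
    and i: "i < n"
  shows "(\<lambda>t. traj A x0 t $ i) \<longlonglongrightarrow> 0"
proof -
  have finJ: "finite J" using J finite_subset by blast
  obtain J1 J2 where J12: "J = J1 \<union> J2" "J1 \<inter> J2 = {}" "card J1 \<le> s" "card J2 \<le> s"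
  proof (cases "card J \<le> s")
    case True
    then show ?thesis using that[of J "{}"] by auto
  next
    case False
    then obtain J1 where J1: "J1 \<subseteq> J" "card J1 = s"
      by (meson le_cases obtain_subset_with_card_n)
    have "card (J - J1) = card J - s" using J1 finJ by (simp add: card_Diff_subset finite_subset)
    show ?thesis
    proof (rule that[of J1 "J - J1"])
      show "J = J1 \<union> (J - J1)" using J1 by blast
      show "J1 \<inter> (J - J1) = {}" by blast
      show "card J1 \<le> s" using J1 by simp
      show "card (J - J1) \<le> s" using \<open>card (J - J1) = card J - s\<close> J False by linarith
    qed
  qed
  define e1 where "e1 = (\<lambda>t. vec p (\<lambda>j. if j \<in> J1 then - (z t $ j) else 0))"
  define e2 where "e2 = (\<lambda>t. vec p (\<lambda>j. if j \<in> J2 then z t $ j else 0))"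
  have ok1: "attack_ok p s e1" unfolding attack_ok_def e1_def
    using J J12 by (intro exI[of _ J1]) auto
  have ok2: "attack_ok p s e2" unfolding attack_ok_def e2_def
    using J J12 by (intro exI[of _ J2]) auto
  have Apc: "A ^\<^sub>m t \<in> carrier_mat n n" for t using A by (rule pow_carrier_mat)
  have trajc: "traj A x0 t \<in> carrier_vec n" for t using Apc x0 unfolding traj_def
    by (metis mult_mat_vec_carrier)
  have traj0: "traj A (0\<^sub>v n) t = 0\<^sub>v n" for t using Apc[of t] unfolding traj_def
    by (intro eq_vecI) (auto simp: scalar_prod_def)
  have C0: "C *\<^sub>v 0\<^sub>v n = 0\<^sub>v p" using C by (intro eq_vecI) (auto simp: scalar_prod_def)
  have m1c: "meas A C x0 e1 t \<in> carrier_vec p" for t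
    using C trajc unfolding meas_def e1_def by auto
  have m2c: "meas A C (0\<^sub>v n) e2 t \<in> carrier_vec p" for t
    using C unfolding meas_def e2_def traj0 by auto
  have ze: "z t + e1 t = e2 t" for t
    using z J12 J unfolding e1_def e2_def by (intro eq_vecI) auto
  have Dm: "D *\<^sub>v meas A C x0 e1 t = D *\<^sub>v meas A C (0\<^sub>v n) e2 t" for t
  proof -
    have "D *\<^sub>v meas A C x0 e1 t = D *\<^sub>v (C *\<^sub>v traj A x0 t) + D *\<^sub>v e1 t"
      unfolding meas_def using D C trajc by (subst mult_add_distrib_mat_vec[OF D]) (auto simp: e1_def)
    also have "\<dots> = D *\<^sub>v z t + D *\<^sub>v e1 t" using eq by simp
    also have "\<dots> = D *\<^sub>v (z t + e1 t)" using D z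
      by (subst mult_add_distrib_mat_vec[OF D]) (auto simp: e1_def)
    also have "\<dots> = D *\<^sub>v meas A C (0\<^sub>v n) e2 t"
      unfolding ze meas_def traj0 C0 by (simp add: e2_def)
    finally show ?thesis .
  qed
  have inp: "(\<lambda>\<tau>. kron D (1\<^sub>m n) *\<^sub>v stack_Y n p (meas A C x0 e1) \<tau>)
      = (\<lambda>\<tau>. kron D (1\<^sub>m n) *\<^sub>v stack_Y n p (meas A C (0\<^sub>v n) e2) \<tau>)"
  proof
    fix \<tau>
    show "kron D (1\<^sub>m n) *\<^sub>v stack_Y n p (meas A C x0 e1) \<tau>
      = kron D (1\<^sub>m n) *\<^sub>v stack_Y n p (meas A C (0\<^sub>v n) e2) \<tau>"
    proof (rule eq_vecI)
      fix q assume "q < dim_vec (kron D (1\<^sub>m n) *\<^sub>v stack_Y n p (meas A C (0\<^sub>v n) e2) \<tau>)"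
      then have q: "q < v * n" using D by (simp add: kron_def)
      show "(kron D (1\<^sub>m n) *\<^sub>v stack_Y n p (meas A C x0 e1) \<tau>) $ q
        = (kron D (1\<^sub>m n) *\<^sub>v stack_Y n p (meas A C (0\<^sub>v n) e2) \<tau>) $ q"
        using kron_stack_entry[OF D q m1c] kron_stack_entry[OF D q m2c] Dm by simp
    qed (simp add: kron_def)
  qed
  define X where "X = F (\<lambda>\<tau>. kron D (1\<^sub>m n) *\<^sub>v stack_Y n p (meas A C x0 e1) \<tau>)"
  have L1: "(\<lambda>t. dist_n n (traj A x0 t) (X t)) \<longlonglongrightarrow> 0"
    using est[rule_format, OF x0 ok1] unfolding X_def .
  have L2: "(\<lambda>t. dist_n n (traj A (0\<^sub>v n) t) (X t)) \<longlonglongrightarrow> 0"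
    using est[rule_format, OF _ ok2] unfolding X_def inp by simp
  have a: "(\<lambda>t. traj A x0 t $ i - X t $ i) \<longlonglongrightarrow> 0" by (rule comp_tendsto[OF L1 i])
  have b: "(\<lambda>t. traj A (0\<^sub>v n) t $ i - X t $ i) \<longlonglongrightarrow> 0" by (rule comp_tendsto[OF L2 i])
  have "(\<lambda>t. (traj A x0 t $ i - X t $ i) - (traj A (0\<^sub>v n) t $ i - X t $ i)) \<longlonglongrightarrow> 0 - 0"
    by (rule tendsto_diff[OF a b])
  then show ?thesis using i by (simp add: traj0)
qed


lemma span_support:
  assumes V: "V \<subseteq> std_basis p" and z: "z \<in> span_vecs p V"
  shows "z \<in> carrier_vec p" "\<And>k. k < p \<Longrightarrow> unit_vec p k \<notin> V \<Longrightarrow> z $ k = 0"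
proof -
  obtain c where zc: "z = finsum_vec TYPE(real) p (\<lambda>w. c w \<cdot>\<^sub>v w) V"
    using z unfolding span_vecs_def by blast
  have Vsub: "V \<subseteq> (\<lambda>j. unit_vec p j) ` {..<p}" using V unfolding std_basis_def by auto
  have finV: "finite V" using finite_subset[OF Vsub] by blast
  have Vc: "(\<lambda>w. c w \<cdot>\<^sub>v w) \<in> V \<rightarrow> carrier_vec p" using Vsub by auto
  show "z \<in> carrier_vec p" unfolding zc by (rule finsum_vec_closed[OF Vc])
  fix k assume k: "k < p" "unit_vec p k \<notin> V"
  have "z $ k = (\<Sum>w\<in>V. (c w \<cdot>\<^sub>v w) $ k)"
    unfolding zc by (rule index_finsum_vec[OF finV k(1) Vc])
  also have "\<dots> = 0"
  proof (rule sum.neutral, rule ballI)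
    fix w assume w: "w \<in> V"
    then obtain j where j: "j < p" "w = unit_vec p j" using Vsub by auto
    then have "j \<noteq> k" using k w by auto
    then show "(c w \<cdot>\<^sub>v w) $ k = 0" using j k by simp
  qed
  finally show "z $ k = 0" .
qed

theorem lemma2:
  fixes A C D :: "real mat" and n p v s :: nat
    and F :: "(nat \<Rightarrow> real vec) \<Rightarrow> (nat \<Rightarrow> real vec)"
  assumes "A \<in> carrier_mat n n" and "C \<in> carrier_mat p n" and "D \<in> carrier_mat v p"
    and "\<forall>x0 \<in> carrier_vec n. \<forall>e. attack_ok p s e \<longrightarrow>
           (\<lambda>t. dist_n n (traj A x0 t)
                  (F (\<lambda>\<tau>. kron D (1\<^sub>m n) *\<^sub>v stack_Y n p (meas A C x0 e) \<tau>) t))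
           \<longlonglongrightarrow> 0"
  shows "sparse_detectable (2 * s) A C D"
  unfolding sparse_detectable_def detectable_def
proof (intro ballI allI impI notI)
  note A = assms(1) and C = assms(2) and D = assms(3) and est = assms(4)
  fix L w lam
  assume L: "L \<in> P_set (2 * s) D"
    and ev: "eigenvector (map_mat complex_of_real A) w lam \<and> 1 \<le> cmod lam"
    and zero: "map_mat complex_of_real (L * D * C) *\<^sub>v w = 0\<^sub>v (dim_row (L * D * C))"
  have dcD: "dim_col D = p" using D by simp
  obtain V where Lc: "dim_col L = v" and V: "V \<subseteq> std_basis p" "card V \<le> 2 * s"
    and ker: "mat_kernel L = (\<lambda>z. D *\<^sub>v z) ` span_vecs p V"
    using L D unfolding P_set_def by auto
  define r where "r = dim_row L"
  have Lm: "L \<in> carrier_mat r v" using Lc unfolding r_def by auto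
  have LDC: "L * D * C \<in> carrier_mat r n" using Lm D C by auto
  have mA: "map_mat complex_of_real A \<in> carrier_mat n n" using A by simp
  have wc: "w \<in> carrier_vec n" and wnz: "w \<noteq> 0\<^sub>v n" and lam1: "1 \<le> cmod lam"
    using ev A unfolding eigenvector_def by auto
  define a where "a = map_vec Re w"
  define b where "b = map_vec Im w"
  have ac: "a \<in> carrier_vec n" and bc: "b \<in> carrier_vec n" using wc unfolding a_def b_def by auto
  have z0: "map_mat complex_of_real (L * D * C) *\<^sub>v w = 0\<^sub>v r" using zero LDC by (simp add: r_def)
  have "(L * D * C) *\<^sub>v a = 0\<^sub>v r"
    unfolding a_def Re_mat_vec[OF LDC wc, symmetric] z0 by (intro eq_vecI) auto
  moreover have "(L * D * C) *\<^sub>v a = L *\<^sub>v (D *\<^sub>v (C *\<^sub>v a))"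
  proof -
    have LD: "L * D \<in> carrier_mat r p" using Lm D by simp
    show ?thesis
      using assoc_mult_mat_vec[OF LD C ac] assoc_mult_mat_vec[OF Lm D mult_mat_vec_carrier[OF C ac]] by simp
  qed
  ultimately have La: "L *\<^sub>v (D *\<^sub>v (C *\<^sub>v a)) = 0\<^sub>v r" by simp
  have "(L * D * C) *\<^sub>v b = 0\<^sub>v r"
    unfolding b_def Im_mat_vec[OF LDC wc, symmetric] z0 by (intro eq_vecI) auto
  moreover have "(L * D * C) *\<^sub>v b = L *\<^sub>v (D *\<^sub>v (C *\<^sub>v b))"
  proof -
    have LD: "L * D \<in> carrier_mat r p" using Lm D by simp
    show ?thesis
      using assoc_mult_mat_vec[OF LD C bc] assoc_mult_mat_vec[OF Lm D mult_mat_vec_carrier[OF C bc]] by simp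
  qed
  ultimately have Lb: "L *\<^sub>v (D *\<^sub>v (C *\<^sub>v b)) = 0\<^sub>v r" by simp
  have "D *\<^sub>v (C *\<^sub>v a) \<in> mat_kernel L" using Lm D C ac La by (intro mat_kernelI) auto
  then obtain za where za: "za \<in> span_vecs p V" "D *\<^sub>v (C *\<^sub>v a) = D *\<^sub>v za"
    using ker by auto
  have "D *\<^sub>v (C *\<^sub>v b) \<in> mat_kernel L" using Lm D C bc Lb by (intro mat_kernelI) auto
  then obtain zb where zb: "zb \<in> span_vecs p V" "D *\<^sub>v (C *\<^sub>v b) = D *\<^sub>v zb"
    using ker by auto
  define J where "J = {j. j < p \<and> unit_vec p j \<in> V}"
  have VJ: "V = (\<lambda>j. unit_vec p j) ` J" using V(1) unfolding J_def std_basis_def by auto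
  have inj: "inj_on (\<lambda>j. unit_vec p j :: real vec) J"
  proof (rule inj_onI)
    fix i j assume "i \<in> J" "j \<in> J" "unit_vec p i = (unit_vec p j :: real vec)"
    then have "(unit_vec p i :: real vec) $ i = unit_vec p j $ i" "i < p" "j < p" by (auto simp: J_def)
    then show "i = j" by (simp split: if_splits)
  qed
  have cardJ: "card J \<le> 2 * s" using V(2) card_image[OF inj] VJ by simp
  have Jsub: "J \<subseteq> {0..<p}" unfolding J_def by auto
  have zac: "za \<in> carrier_vec p" and zbc: "zb \<in> carrier_vec p"
    using span_support(1)[OF V(1)] za zb by auto
  have za0: "\<And>k. k < p \<Longrightarrow> k \<notin> J \<Longrightarrow> za $ k = 0"
    using span_support(2)[OF V(1) za(1)] unfolding J_def by auto
  have zb0: "\<And>k. k < p \<Longrightarrow> k \<notin> J \<Longrightarrow> zb $ k = 0"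
    using span_support(2)[OF V(1) zb(1)] unfolding J_def by auto
  define zc where "zc = vec p (\<lambda>j. Complex (za $ j) (zb $ j))"
  have zcc: "zc \<in> carrier_vec p" unfolding zc_def by simp
  have Rezc: "map_vec Re zc = za" using zac unfolding zc_def by (intro eq_vecI) auto
  have Imzc: "map_vec Im zc = zb" using zbc unfolding zc_def by (intro eq_vecI) auto
  define mC where "mC = map_mat complex_of_real C"
  define mD where "mD = map_mat complex_of_real D"
  have mC: "mC \<in> carrier_mat p n" and mD: "mD \<in> carrier_mat v p"
    using C D unfolding mC_def mD_def by auto
  define u where "u = mD *\<^sub>v (mC *\<^sub>v w)"
  have mCw: "mC *\<^sub>v w \<in> carrier_vec p" using mC wc by simp
  have ReCw: "map_vec Re (mC *\<^sub>v w) = C *\<^sub>v a" unfolding mC_def a_def by (rule Re_mat_vec[OF C wc])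
  have ImCw: "map_vec Im (mC *\<^sub>v w) = C *\<^sub>v b" unfolding mC_def b_def by (rule Im_mat_vec[OF C wc])
  have Du: "mD *\<^sub>v zc = u"
  proof (rule eq_vecI)
    fix i assume i: "i < dim_vec u"
    then have iv: "i < v" using mD unfolding u_def by simp
    have "Re ((mD *\<^sub>v zc) $ i) = (map_vec Re (mD *\<^sub>v zc)) $ i" using iv mD zcc by simp
    also have "\<dots> = (D *\<^sub>v za) $ i" unfolding mD_def Re_mat_vec[OF D zcc] Rezc ..
    also have "\<dots> = (D *\<^sub>v (C *\<^sub>v a)) $ i" using za by simp
    also have "\<dots> = (map_vec Re u) $ i" unfolding u_def mD_def Re_mat_vec[OF D mCw] ReCw ..
    also have "\<dots> = Re (u $ i)" using iv mD unfolding u_def by simp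
    finally have re: "Re ((mD *\<^sub>v zc) $ i) = Re (u $ i)" .
    have "Im ((mD *\<^sub>v zc) $ i) = (map_vec Im (mD *\<^sub>v zc)) $ i" using iv mD zcc by simp
    also have "\<dots> = (D *\<^sub>v zb) $ i" unfolding mD_def Im_mat_vec[OF D zcc] Imzc ..
    also have "\<dots> = (D *\<^sub>v (C *\<^sub>v b)) $ i" using zb by simp
    also have "\<dots> = (map_vec Im u) $ i" unfolding u_def mD_def Im_mat_vec[OF D mCw] ImCw ..
    also have "\<dots> = Im (u $ i)" using iv mD unfolding u_def by simp
    finally have im: "Im ((mD *\<^sub>v zc) $ i) = Im (u $ i)" .
    show "(mD *\<^sub>v zc) $ i = u $ i" using re im by (rule complex_eqI)
  qed (use mD zcc in \<open>simp add: u_def\<close>)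
  have pw: "map_mat complex_of_real (A ^\<^sub>m t) *\<^sub>v w = lam ^ t \<cdot>\<^sub>v w" for t
    unfolding of_real_hom.mat_hom_pow[OF A] using eigenvector_pow[OF mA conjunct1[OF ev]] .
  have Apc: "A ^\<^sub>m t \<in> carrier_mat n n" for t using A by (rule pow_carrier_mat)
  have trA: "traj A a t = map_vec Re (lam ^ t \<cdot>\<^sub>v w)" for t
    unfolding traj_def a_def Re_mat_vec[OF Apc wc, symmetric] pw ..
  have trB: "traj A b t = map_vec Im (lam ^ t \<cdot>\<^sub>v w)" for t
    unfolding traj_def b_def Im_mat_vec[OF Apc wc, symmetric] pw ..
  have lw: "lam ^ t \<cdot>\<^sub>v w \<in> carrier_vec n" for t using wc by simp
  have lzc: "lam ^ t \<cdot>\<^sub>v zc \<in> carrier_vec p" for t using zcc by simp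
  have key: "mD *\<^sub>v (mC *\<^sub>v (lam ^ t \<cdot>\<^sub>v w)) = mD *\<^sub>v (lam ^ t \<cdot>\<^sub>v zc)" for t
  proof -
    have "mD *\<^sub>v (mC *\<^sub>v (lam ^ t \<cdot>\<^sub>v w)) = lam ^ t \<cdot>\<^sub>v u"
      unfolding u_def mult_mat_vec[OF mC wc] mult_mat_vec[OF mD mCw] ..
    also have "\<dots> = mD *\<^sub>v (lam ^ t \<cdot>\<^sub>v zc)" unfolding Du[symmetric] mult_mat_vec[OF mD zcc] ..
    finally show ?thesis .
  qed
  have mCl: "mC *\<^sub>v (lam ^ t \<cdot>\<^sub>v w) \<in> carrier_vec p" for t using mC lw by simp
  have eqA: "D *\<^sub>v (C *\<^sub>v traj A a t) = D *\<^sub>v map_vec Re (lam ^ t \<cdot>\<^sub>v zc)" for t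
    unfolding trA Re_mat_vec[OF C lw, symmetric, folded mC_def]
      Re_mat_vec[OF D mCl, symmetric, folded mD_def] key Re_mat_vec[OF D lzc, folded mD_def] ..
  have eqB: "D *\<^sub>v (C *\<^sub>v traj A b t) = D *\<^sub>v map_vec Im (lam ^ t \<cdot>\<^sub>v zc)" for t
    unfolding trB Im_mat_vec[OF C lw, symmetric, folded mC_def]
      Im_mat_vec[OF D mCl, symmetric, folded mD_def] key Im_mat_vec[OF D lzc, folded mD_def] ..
  have zc0: "zc $ j = 0" if "j < p" "j \<notin> J" for j
    using that za0 zb0 unfolding zc_def by (simp add: Complex_eq)
  obtain i where i: "i < n" "w $ i \<noteq> 0"
    using wnz wc by (metis eq_vecI index_zero_vec(1,2) carrier_vecD)
  have zA1: "\<And>t. map_vec Re (lam ^ t \<cdot>\<^sub>v zc) \<in> carrier_vec p"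
    and zB1: "\<And>t. map_vec Im (lam ^ t \<cdot>\<^sub>v zc) \<in> carrier_vec p" using zcc by auto
  have zA2: "\<And>t j. j < p \<Longrightarrow> j \<notin> J \<Longrightarrow> map_vec Re (lam ^ t \<cdot>\<^sub>v zc) $ j = 0"
    and zB2: "\<And>t j. j < p \<Longrightarrow> j \<notin> J \<Longrightarrow> map_vec Im (lam ^ t \<cdot>\<^sub>v zc) $ j = 0"
    using zc0 zcc by auto
  have ta: "(\<lambda>t. traj A a t $ i) \<longlonglongrightarrow> 0"
    by (rule lemmaK[OF A C D est ac Jsub cardJ, where z="\<lambda>t. map_vec Re (lam ^ t \<cdot>\<^sub>v zc)"])
       (use zA1 zA2 eqA i in \<open>simp_all\<close>)
  have tb: "(\<lambda>t. traj A b t $ i) \<longlonglongrightarrow> 0"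
    by (rule lemmaK[OF A C D est bc Jsub cardJ, where z="\<lambda>t. map_vec Im (lam ^ t \<cdot>\<^sub>v zc)"])
       (use zB1 zB2 eqB i in \<open>simp_all\<close>)
  have "(\<lambda>t. lam ^ t * w $ i) \<longlonglongrightarrow> 0"
    unfolding tendsto_complex_iff using ta tb i wc by (simp add: trA trB)
  then have "(\<lambda>t. cmod (lam ^ t * w $ i)) \<longlonglongrightarrow> 0"
    using tendsto_norm_zero by blast
  moreover have "\<exists>N. \<forall>t\<ge>N. cmod (w $ i) \<le> cmod (lam ^ t * w $ i)"
  proof (intro exI allI impI)
    fix t :: nat
    have "1 \<le> cmod lam ^ t" using lam1 by (rule one_le_power)
    then show "cmod (w $ i) \<le> cmod (lam ^ t * w $ i)"
      by (simp add: norm_mult norm_power mult_le_cancel_right1)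
  qed
  ultimately have "cmod (w $ i) \<le> 0" by (rule LIMSEQ_le_const)
  then show False using i by simp
qed

end
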